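(* For all integers $t_1\geq s_1\geq 1$ and $t_2\geq s_2\geq 1$, $$\operatorname{degen}(K_{s_1,t_1}\boxtimes K_{s_2,t_2})=\max\{s_1+s_2+s_1s_2,\ \min\{t_1+t_2,\ s_1(t_2+1),\ s_2(t_1+1)\},\ \min\{s_1t_2,\ s_2t_1\}\}.$$
   Context: The degeneracy $\operatorname{degen}(G)$ of a graph $G$ is the minimum integer $d$ such that every subgraph of $G$ has minimum degree at most $d$. The strong product $G_1 \boxtimes G_2$ has vertex set $V(G_1)\times V(G_2)$, with distinct vertices $(a,v),(b,u)$ adjacent iff ($a=b$ or $ab\in E(G_1)$) and ($u=v$ or $uv\in E(G_2)$). *)

theory Defs
  imports Main
begin

text \<open>A finite simple graph is represented by a vertex set V and an edge set E,
  each edge being a 2-element set of vertices.\<close>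

type_synonym 'a graph = "'a set \<times> 'a set set"

definition verts :: "'a graph \<Rightarrow> 'a set" where "verts G = fst G"
definition edges :: "'a graph \<Rightarrow> 'a set set" where "edges G = snd G"

definition nonempty_subgraph :: "'a graph \<Rightarrow> 'a graph \<Rightarrow> bool" where
  "nonempty_subgraph H G \<longleftrightarrow>
     verts H \<noteq> {} \<and> verts H \<subseteq> verts G \<and> edges H \<subseteq> edges G \<and>
     (\<forall>e\<in>edges H. e \<subseteq> verts H)"

definition degree :: "'a graph \<Rightarrow> 'a \<Rightarrow> nat" where
  "degree G v = card {e \<in> edges G. v \<in> e}"

definition degen :: "'a graph \<Rightarrow> nat" where
  "degen G = (LEAST d. \<forall>H. nonempty_subgraph H G \<longrightarrow> (\<exists>v\<in>verts H. degree H v \<le> d))"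

definition K_bip :: "nat \<Rightarrow> nat \<Rightarrow> (nat + nat) graph" where
  "K_bip s t = (Inl ` {..<s} \<union> Inr ` {..<t},
                {{Inl i, Inr j} | i j. i < s \<and> j < t})"

definition strong_prod :: "'a graph \<Rightarrow> 'b graph \<Rightarrow> ('a \<times> 'b) graph" where
  "strong_prod G1 G2 = (verts G1 \<times> verts G2,
     {{(a,v),(b,u)} | a v b u.
        a \<in> verts G1 \<and> b \<in> verts G1 \<and> v \<in> verts G2 \<and> u \<in> verts G2 \<and>
        (a,v) \<noteq> (b,u) \<and>
        (a = b \<or> {a,b} \<in> edges G1) \<and> (u = v \<or> {u,v} \<in> edges G2)})"

end

theory Submission
  imports Defs
begin


definition VK :: "nat \<Rightarrow> nat \<Rightarrow> (nat + nat) set" where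
  "VK s t = Inl ` {..<s} \<union> Inr ` {..<t}"

definition CK :: "nat \<Rightarrow> nat \<Rightarrow> nat + nat \<Rightarrow> (nat + nat) set" where
  "CK s t x = insert x (if isl x then Inr ` {..<t} else Inl ` {..<s})"

lemma verts_K: "verts (K_bip s t) = VK s t"
  by (simp add: verts_def K_bip_def VK_def)

lemma K_edge:
  assumes "x \<in> VK s t" "y \<in> VK s t"
  shows "{x,y} \<in> edges (K_bip s t) \<longleftrightarrow> isl x \<noteq> isl y"
proof
  assume "{x,y} \<in> edges (K_bip s t)"
  then obtain i j where "{x,y} = {Inl i, Inr j}" by (auto simp: edges_def K_bip_def)
  then show "isl x \<noteq> isl y" by (auto simp: doubleton_eq_iff)
next
  assume "isl x \<noteq> isl y"
  with assms show "{x,y} \<in> edges (K_bip s t)"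
    by (auto simp: edges_def K_bip_def VK_def insert_commute)
qed

lemma K_comp:
  assumes "x \<in> VK s t" "y \<in> VK s t"
  shows "(x = y \<or> {x,y} \<in> edges (K_bip s t)) \<longleftrightarrow> y \<in> CK s t x"
  using assms by (auto simp: K_edge CK_def VK_def)

lemma CK_sym:
  assumes "x \<in> VK s t" "y \<in> VK s t"
  shows "y \<in> CK s t x \<longleftrightarrow> x \<in> CK s t y"
  using assms by (auto simp: CK_def VK_def)

abbreviation GG where "GG s1 t1 s2 t2 \<equiv> strong_prod (K_bip s1 t1) (K_bip s2 t2)"

lemma verts_GG: "verts (GG s1 t1 s2 t2) = VK s1 t1 \<times> VK s2 t2"
  by (simp add: strong_prod_def verts_def K_bip_def VK_def)

lemma edge_form: "e \<in> edges (GG s1 t1 s2 t2) \<Longrightarrow> \<exists>p q. e = {p,q} \<and> p \<noteq> q"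
  by (auto simp: strong_prod_def edges_def)

lemma GG_edge:
  "{p,q} \<in> edges (GG s1 t1 s2 t2) \<longleftrightarrow>
    p \<in> VK s1 t1 \<times> VK s2 t2 \<and> q \<in> VK s1 t1 \<times> VK s2 t2 \<and> p \<noteq> q \<and>
    fst q \<in> CK s1 t1 (fst p) \<and> snd q \<in> CK s2 t2 (snd p)"
proof
  assume "{p,q} \<in> edges (GG s1 t1 s2 t2)"
  then obtain a v b u where e: "{p,q} = {(a,v),(b,u)}" and
    c: "a \<in> VK s1 t1" "b \<in> VK s1 t1" "v \<in> VK s2 t2" "u \<in> VK s2 t2" "(a,v) \<noteq> (b,u)"
       "a = b \<or> {a,b} \<in> edges (K_bip s1 t1)" "u = v \<or> {u,v} \<in> edges (K_bip s2 t2)"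
    by (auto simp: strong_prod_def edges_def verts_K)
  have c1: "b \<in> CK s1 t1 a" using c K_comp by blast
  have c2: "u \<in> CK s2 t2 v" using c K_comp[of v s2 t2 u] by (auto simp: insert_commute)
  from e have "(p = (a,v) \<and> q = (b,u)) \<or> (p = (b,u) \<and> q = (a,v))" by (auto simp: doubleton_eq_iff)
  then show "p \<in> VK s1 t1 \<times> VK s2 t2 \<and> q \<in> VK s1 t1 \<times> VK s2 t2 \<and> p \<noteq> q \<and>
    fst q \<in> CK s1 t1 (fst p) \<and> snd q \<in> CK s2 t2 (snd p)"
    using c c1 c2 CK_sym by auto
next
  assume h: "p \<in> VK s1 t1 \<times> VK s2 t2 \<and> q \<in> VK s1 t1 \<times> VK s2 t2 \<and> p \<noteq> q \<and>
    fst q \<in> CK s1 t1 (fst p) \<and> snd q \<in> CK s2 t2 (snd p)"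
  obtain a v where p: "p = (a,v)" by (cases p)
  obtain b u where q: "q = (b,u)" by (cases q)
  have "a = b \<or> {a,b} \<in> edges (K_bip s1 t1)" using h p q K_comp by auto
  moreover have "u = v \<or> {u,v} \<in> edges (K_bip s2 t2)" using h p q K_comp[of v s2 t2 u] by (auto simp: insert_commute)
  ultimately show "{p,q} \<in> edges (GG s1 t1 s2 t2)" using h p q
    unfolding strong_prod_def edges_def verts_K by auto
qed


definition nbr where "nbr s1 t1 s2 t2 S p = {q \<in> S. {p,q} \<in> edges (GG s1 t1 s2 t2)}"

lemma finite_VK: "finite (VK s t)" by (simp add: VK_def)

lemma nbr_eq:
  assumes "S \<subseteq> VK s1 t1 \<times> VK s2 t2" "p \<in> VK s1 t1 \<times> VK s2 t2"
  shows "nbr s1 t1 s2 t2 S p = S \<inter> (CK s1 t1 (fst p) \<times> CK s2 t2 (snd p)) - {p}"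
  using assms by (auto simp: nbr_def GG_edge)

lemma deg_le:
  assumes "nonempty_subgraph H (GG s1 t1 s2 t2)"
  shows "degree H p \<le> card (nbr s1 t1 s2 t2 (verts H) p)"
proof -
  have fin: "finite (verts H)" using assms finite_VK
    by (metis finite_SigmaI finite_subset nonempty_subgraph_def verts_GG)
  have "{e \<in> edges H. p \<in> e} \<subseteq> (\<lambda>q. {p,q}) ` nbr s1 t1 s2 t2 (verts H) p"
  proof
    fix e assume e: "e \<in> {e \<in> edges H. p \<in> e}"
    then have eG: "e \<in> edges (GG s1 t1 s2 t2)" and eH: "e \<subseteq> verts H"
      using assms by (auto simp: nonempty_subgraph_def)
    obtain x y where xy: "e = {x,y}" "x \<noteq> y" using edge_form[OF eG] by blast
    show "e \<in> (\<lambda>q. {p,q}) ` nbr s1 t1 s2 t2 (verts H) p"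
    proof (cases "p = x")
      case True
      then show ?thesis using xy eG eH by (auto simp: nbr_def)
    next
      case False
      then have "p = y" using e xy by auto
      then show ?thesis using xy eG eH by (auto simp: nbr_def insert_commute)
    qed
  qed
  moreover have "finite (nbr s1 t1 s2 t2 (verts H) p)" using fin by (simp add: nbr_def)
  ultimately show ?thesis unfolding degree_def
    by (meson card_image_le card_mono finite_imageI le_trans)
qed

definition ind where "ind s1 t1 s2 t2 S = (S, {e \<in> edges (GG s1 t1 s2 t2). e \<subseteq> S})"

lemma ind_sub:
  assumes "S \<subseteq> VK s1 t1 \<times> VK s2 t2" "S \<noteq> {}"
  shows "nonempty_subgraph (ind s1 t1 s2 t2 S) (GG s1 t1 s2 t2)"
  using assms by (auto simp: nonempty_subgraph_def ind_def verts_def edges_def verts_GG[unfolded verts_def])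

lemma deg_ind:
  assumes "S \<subseteq> VK s1 t1 \<times> VK s2 t2" "p \<in> S"
  shows "degree (ind s1 t1 s2 t2 S) p = card (nbr s1 t1 s2 t2 S p)"
proof -
  have fin: "finite S" using assms finite_VK by (meson finite_SigmaI finite_subset)
  have eq: "{e \<in> edges (ind s1 t1 s2 t2 S). p \<in> e} = (\<lambda>q. {p,q}) ` nbr s1 t1 s2 t2 S p"
  proof
    show "{e \<in> edges (ind s1 t1 s2 t2 S). p \<in> e} \<subseteq> (\<lambda>q. {p,q}) ` nbr s1 t1 s2 t2 S p"
    proof
      fix e assume e: "e \<in> {e \<in> edges (ind s1 t1 s2 t2 S). p \<in> e}"
      then have eG: "e \<in> edges (GG s1 t1 s2 t2)" and eH: "e \<subseteq> S"
        by (auto simp: ind_def edges_def)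
      obtain x y where xy: "e = {x,y}" "x \<noteq> y" using edge_form[OF eG] by blast
      show "e \<in> (\<lambda>q. {p,q}) ` nbr s1 t1 s2 t2 S p"
      proof (cases "p = x")
        case True
        then show ?thesis using xy eG eH by (auto simp: nbr_def)
      next
        case False
        then have "p = y" using e xy by auto
        then show ?thesis using xy eG eH by (auto simp: nbr_def insert_commute)
      qed
    qed
  next
    show "(\<lambda>q. {p,q}) ` nbr s1 t1 s2 t2 S p \<subseteq> {e \<in> edges (ind s1 t1 s2 t2 S). p \<in> e}"
      using assms by (auto simp: nbr_def ind_def edges_def)
  qed
  have inj: "inj_on (\<lambda>q. {p,q}) (nbr s1 t1 s2 t2 S p)"
    by (auto simp: inj_on_def doubleton_eq_iff)
  show ?thesis unfolding degree_def eq using card_image[OF inj] by simp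
qed


lemma card_CK: "card (CK s t x) = 1 + (if isl x then t else s)"
  by (cases x) (auto simp: CK_def card_image card_insert_if)

lemma CK_sub: "x \<in> VK s t \<Longrightarrow> CK s t x \<subseteq> VK s t"
  by (auto simp: CK_def VK_def)

lemma finite_CK: "finite (CK s t x)" by (simp add: CK_def)

lemma card_full:
  assumes "p \<in> VK s1 t1 \<times> VK s2 t2"
  shows "card (nbr s1 t1 s2 t2 (VK s1 t1 \<times> VK s2 t2) p) = card (CK s1 t1 (fst p)) * card (CK s2 t2 (snd p)) - 1"
proof -
  have "nbr s1 t1 s2 t2 (VK s1 t1 \<times> VK s2 t2) p = CK s1 t1 (fst p) \<times> CK s2 t2 (snd p) - {p}"
    using nbr_eq[OF subset_refl assms] CK_sub[of "fst p" s1 t1] CK_sub[of "snd p" s2 t2] assms by (auto simp: mem_Times_iff)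
  moreover have "p \<in> CK s1 t1 (fst p) \<times> CK s2 t2 (snd p)" by (auto simp: CK_def mem_Times_iff)
  ultimately show ?thesis by (simp add: card_cartesian_product finite_CK)
qed

lemma LB1:
  assumes "p \<in> VK s1 t1 \<times> VK s2 t2" "s1 \<le> t1" "s2 \<le> t2"
  shows "s1 + s2 + s1 * s2 \<le> card (nbr s1 t1 s2 t2 (VK s1 t1 \<times> VK s2 t2) p)"
proof -
  have "1 + s1 \<le> card (CK s1 t1 (fst p))" "1 + s2 \<le> card (CK s2 t2 (snd p))"
    using assms by (auto simp: card_CK)
  then have "(1+s1)*(1+s2) \<le> card (CK s1 t1 (fst p)) * card (CK s2 t2 (snd p))"
    by (rule mult_le_mono)
  then show ?thesis unfolding card_full[OF assms(1)] by (simp add: algebra_simps)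
qed



lemma finite_nbr: "S \<subseteq> VK s1 t1 \<times> VK s2 t2 \<Longrightarrow> finite (nbr s1 t1 s2 t2 S p)"
proof -
  assume a: "S \<subseteq> VK s1 t1 \<times> VK s2 t2"
  have "finite S" using a finite_VK by (meson finite_SigmaI rev_finite_subset)
  moreover have "nbr s1 t1 s2 t2 S p \<subseteq> S" unfolding nbr_def by blast
  ultimately show ?thesis by (rule rev_finite_subset)
qed

lemma nbr_ge:
  assumes "S \<subseteq> VK s1 t1 \<times> VK s2 t2" "p \<in> VK s1 t1 \<times> VK s2 t2"
    "T \<subseteq> S \<inter> (CK s1 t1 (fst p) \<times> CK s2 t2 (snd p)) - {p}"
  shows "card T \<le> card (nbr s1 t1 s2 t2 S p)"
proof -
  have "T \<subseteq> nbr s1 t1 s2 t2 S p" using assms(3) nbr_eq[OF assms(1,2)] by simp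
  then show ?thesis by (rule card_mono[OF finite_nbr[OF assms(1)]])
qed

lemma nbr_le:
  assumes "S \<subseteq> VK s1 t1 \<times> VK s2 t2" "p \<in> VK s1 t1 \<times> VK s2 t2" "finite T"
    "S \<inter> (CK s1 t1 (fst p) \<times> CK s2 t2 (snd p)) - {p} \<subseteq> T"
  shows "card (nbr s1 t1 s2 t2 S p) \<le> card T"
proof -
  have "nbr s1 t1 s2 t2 S p \<subseteq> T" using assms(4) nbr_eq[OF assms(1,2)] by simp
  then show ?thesis by (rule card_mono[OF assms(3)])
qed

lemma LB2:
  assumes "p \<in> VK s1 t1 \<times> VK s2 t2 - Inr ` {..<t1} \<times> Inr ` {..<t2}"
  shows "min (t1 + t2) (min (s1 * (t2 + 1)) (s2 * (t1 + 1))) \<le>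
     card (nbr s1 t1 s2 t2 (VK s1 t1 \<times> VK s2 t2 - Inr ` {..<t1} \<times> Inr ` {..<t2}) p)"
    (is "?m \<le> card (nbr s1 t1 s2 t2 ?S p)")
proof -
  have S: "?S \<subseteq> VK s1 t1 \<times> VK s2 t2" by blast
  have pV: "p \<in> VK s1 t1 \<times> VK s2 t2" using assms by blast
  consider (AA) a v where "p = (Inl a, Inl v)" "a < s1" "v < s2"
    | (AB) a w where "p = (Inl a, Inr w)" "a < s1" "w < t2"
    | (BA) b v where "p = (Inr b, Inl v)" "b < t1" "v < s2"
    using assms by (auto simp: VK_def)
  then show ?thesis
  proof cases
    case AA
    let ?T = "{Inl a} \<times> Inr ` {..<t2} \<union> Inr ` {..<t1} \<times> {Inl v} :: ((nat+nat)\<times>(nat+nat)) set"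
    have "card ?T = t2 + t1"
      by (subst card_Un_disjoint) (auto simp: card_cartesian_product card_image)
    moreover have "card ?T \<le> card (nbr s1 t1 s2 t2 ?S p)"
      by (rule nbr_ge[OF S pV]) (use AA in \<open>auto simp: CK_def VK_def\<close>)
    ultimately show ?thesis by linarith
  next
    case AB
    let ?T = "insert (Inl a) (Inr ` {..<t1}) \<times> Inl ` {..<s2} :: ((nat+nat)\<times>(nat+nat)) set"
    have "card ?T = s2 * (t1 + 1)"
      by (simp add: card_cartesian_product card_image card_insert_if image_iff)
    moreover have "card ?T \<le> card (nbr s1 t1 s2 t2 ?S p)"
      by (rule nbr_ge[OF S pV]) (use AB in \<open>auto simp: CK_def VK_def\<close>)
    ultimately show ?thesis by linarith
  next
    case BA
    let ?T = "Inl ` {..<s1} \<times> insert (Inl v) (Inr ` {..<t2}) :: ((nat+nat)\<times>(nat+nat)) set"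
    have "card ?T = s1 * (t2 + 1)"
      by (simp add: card_cartesian_product card_image card_insert_if image_iff)
    moreover have "card ?T \<le> card (nbr s1 t1 s2 t2 ?S p)"
      by (rule nbr_ge[OF S pV]) (use BA in \<open>auto simp: CK_def VK_def\<close>)
    ultimately show ?thesis by linarith
  qed
qed

lemma LB3:
  assumes "p \<in> Inl ` {..<s1} \<times> Inr ` {..<t2} \<union> Inr ` {..<t1} \<times> Inl ` {..<s2}"
  shows "min (s1 * t2) (s2 * t1) \<le>
     card (nbr s1 t1 s2 t2 (Inl ` {..<s1} \<times> Inr ` {..<t2} \<union> Inr ` {..<t1} \<times> Inl ` {..<s2}) p)"
    (is "?m \<le> card (nbr s1 t1 s2 t2 ?S p)")
proof -
  have S: "?S \<subseteq> VK s1 t1 \<times> VK s2 t2" by (auto simp: VK_def)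
  have pV: "p \<in> VK s1 t1 \<times> VK s2 t2" using assms S by blast
  consider (AB) a w where "p = (Inl a, Inr w)" "a < s1" "w < t2"
    | (BA) b v where "p = (Inr b, Inl v)" "b < t1" "v < s2"
    using assms by auto
  then show ?thesis
  proof cases
    case AB
    let ?T = "Inr ` {..<t1} \<times> Inl ` {..<s2} :: ((nat+nat)\<times>(nat+nat)) set"
    have "card ?T = s2 * t1"
      by (simp add: card_cartesian_product card_image)
    moreover have "card ?T \<le> card (nbr s1 t1 s2 t2 ?S p)"
      by (rule nbr_ge[OF S pV]) (use AB in \<open>auto simp: CK_def VK_def\<close>)
    ultimately show ?thesis by linarith
  next
    case BA
    let ?T = "Inl ` {..<s1} \<times> Inr ` {..<t2} :: ((nat+nat)\<times>(nat+nat)) set"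
    have "card ?T = s1 * t2"
      by (simp add: card_cartesian_product card_image)
    moreover have "card ?T \<le> card (nbr s1 t1 s2 t2 ?S p)"
      by (rule nbr_ge[OF S pV]) (use BA in \<open>auto simp: CK_def VK_def\<close>)
    ultimately show ?thesis by linarith
  qed
qed



lemma UB:
  fixes S :: "((nat+nat)\<times>(nat+nat)) set"
  assumes SV: "S \<subseteq> VK s1 t1 \<times> VK s2 t2" and Sne: "S \<noteq> {}"
  shows "\<exists>p\<in>S. card (nbr s1 t1 s2 t2 S p) \<le>
           max (s1 + s2 + s1 * s2)
             (max (min (t1 + t2) (min (s1 * (t2 + 1)) (s2 * (t1 + 1))))
                  (min (s1 * t2) (s2 * t1)))" (is "\<exists>p\<in>S. _ \<le> ?D")
proof (cases "\<exists>p\<in>S. p \<in> Inr ` {..<t1} \<times> Inr ` {..<t2}")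
  case True
  then obtain p where pS: "p \<in> S" and pB: "p \<in> Inr ` {..<t1} \<times> Inr ` {..<t2}" by blast
  have pV: "p \<in> VK s1 t1 \<times> VK s2 t2" using pS SV by blast
  have "card (nbr s1 t1 s2 t2 S p) \<le> card (CK s1 t1 (fst p) \<times> CK s2 t2 (snd p) - {p})"
    by (rule nbr_le[OF SV pV]) (auto simp: finite_CK)
  also have "\<dots> = card (CK s1 t1 (fst p)) * card (CK s2 t2 (snd p)) - 1"
  proof -
    have "p \<in> CK s1 t1 (fst p) \<times> CK s2 t2 (snd p)" by (auto simp: CK_def mem_Times_iff)
    then show ?thesis by (simp add: card_cartesian_product finite_CK)
  qed
  also have "\<dots> = (1 + s1) * (1 + s2) - 1" using pB by (auto simp: card_CK)
  also have "\<dots> = s1 + s2 + s1 * s2" by (simp add: algebra_simps)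
  finally show ?thesis using pS by (intro bexI[of _ p]) auto
next
  case False
  define X where "X = S \<inter> Inl ` {..<s1} \<times> Inl ` {..<s2}"
  define Y where "Y = S \<inter> Inl ` {..<s1} \<times> Inr ` {..<t2}"
  define Z where "Z = S \<inter> Inr ` {..<t1} \<times> Inl ` {..<s2}"
  have finS: "finite S" using SV finite_VK by (meson finite_SigmaI rev_finite_subset)
  have fX: "finite X" "finite Y" "finite Z" using finS by (auto simp: X_def Y_def Z_def)
  have SXYZ: "S = X \<union> Y \<union> Z"
  proof
    show "S \<subseteq> X \<union> Y \<union> Z"
    proof
      fix p assume p: "p \<in> S"
      then have "p \<in> VK s1 t1 \<times> VK s2 t2" using SV by blast
      then show "p \<in> X \<union> Y \<union> Z" using p False by (auto simp: VK_def X_def Y_def Z_def)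
    qed
  qed (auto simp: X_def Y_def Z_def)
  have cY: "card Y \<le> s1 * t2"
  proof -
    have "card Y \<le> card (Inl ` {..<s1} \<times> Inr ` {..<t2} :: ((nat+nat)\<times>(nat+nat)) set)"
      by (rule card_mono) (auto simp: Y_def)
    then show ?thesis by (simp add: card_cartesian_product card_image)
  qed
  have cZ: "card Z \<le> s2 * t1"
  proof -
    have "card Z \<le> card (Inr ` {..<t1} \<times> Inl ` {..<s2} :: ((nat+nat)\<times>(nat+nat)) set)"
      by (rule card_mono) (auto simp: Z_def)
    then show ?thesis by (simp add: card_cartesian_product card_image mult.commute)
  qed
  have hX: "card (nbr s1 t1 s2 t2 S p) \<le> min (card Y) t2 + min (card Z) t1" if pX: "p \<in> X" for p
  proof -
    obtain a v where p: "p = (Inl a, Inl v)" "a < s1" "v < s2" using pX by (auto simp: X_def)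
    have pV: "p \<in> VK s1 t1 \<times> VK s2 t2" using pX SV by (auto simp: X_def)
    define TY where "TY = Y \<inter> {Inl a} \<times> UNIV"
    define TZ where "TZ = Z \<inter> UNIV \<times> {Inl v}"
    have "card (nbr s1 t1 s2 t2 S p) \<le> card (TY \<union> TZ)"
    proof (rule nbr_le[OF SV pV])
      show "finite (TY \<union> TZ)" using fX by (simp add: TY_def TZ_def)
      show "S \<inter> CK s1 t1 (fst p) \<times> CK s2 t2 (snd p) - {p} \<subseteq> TY \<union> TZ"
        using SV False p by (auto simp: CK_def VK_def TY_def TZ_def Y_def Z_def)
    qed
    also have "\<dots> \<le> card TY + card TZ" by (rule card_Un_le)
    also have "card TY \<le> min (card Y) t2"
    proof -
      have "card TY \<le> card Y" using fX by (intro card_mono) (auto simp: TY_def)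
      moreover have "card TY \<le> card ({Inl a} \<times> Inr ` {..<t2} :: ((nat+nat)\<times>(nat+nat)) set)"
        by (rule card_mono) (auto simp: TY_def Y_def)
      ultimately show ?thesis by (simp add: card_cartesian_product card_image)
    qed
    also have "card TZ \<le> min (card Z) t1"
    proof -
      have "card TZ \<le> card Z" using fX by (intro card_mono) (auto simp: TZ_def)
      moreover have "card TZ \<le> card (Inr ` {..<t1} \<times> {Inl v} :: ((nat+nat)\<times>(nat+nat)) set)"
        by (rule card_mono) (auto simp: TZ_def Z_def)
      ultimately show ?thesis by (simp add: card_cartesian_product card_image)
    qed
    finally show ?thesis by simp
  qed
  have hY: "card (nbr s1 t1 s2 t2 S p) \<le> min (card X) s2 + card Z" if pY: "p \<in> Y" for p
  proof -
    obtain a w where p: "p = (Inl a, Inr w)" "a < s1" "w < t2" using pY by (auto simp: Y_def)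
    have pV: "p \<in> VK s1 t1 \<times> VK s2 t2" using pY SV by (auto simp: Y_def)
    define TX where "TX = X \<inter> {Inl a} \<times> UNIV"
    have "card (nbr s1 t1 s2 t2 S p) \<le> card (TX \<union> Z)"
    proof (rule nbr_le[OF SV pV])
      show "finite (TX \<union> Z)" using fX by (simp add: TX_def)
      show "S \<inter> CK s1 t1 (fst p) \<times> CK s2 t2 (snd p) - {p} \<subseteq> TX \<union> Z"
        using SV False p by (auto simp: CK_def VK_def TX_def X_def Z_def)
    qed
    also have "\<dots> \<le> card TX + card Z" by (rule card_Un_le)
    also have "card TX \<le> min (card X) s2"
    proof -
      have "card TX \<le> card X" using fX by (intro card_mono) (auto simp: TX_def)
      moreover have "card TX \<le> card ({Inl a} \<times> Inl ` {..<s2} :: ((nat+nat)\<times>(nat+nat)) set)"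
        by (rule card_mono) (auto simp: TX_def X_def)
      ultimately show ?thesis by (simp add: card_cartesian_product card_image)
    qed
    finally show ?thesis by simp
  qed
  have hZ: "card (nbr s1 t1 s2 t2 S p) \<le> min (card X) s1 + card Y" if pZ: "p \<in> Z" for p
  proof -
    obtain b v where p: "p = (Inr b, Inl v)" "b < t1" "v < s2" using pZ by (auto simp: Z_def)
    have pV: "p \<in> VK s1 t1 \<times> VK s2 t2" using pZ SV by (auto simp: Z_def)
    define TX where "TX = X \<inter> UNIV \<times> {Inl v}"
    have "card (nbr s1 t1 s2 t2 S p) \<le> card (TX \<union> Y)"
    proof (rule nbr_le[OF SV pV])
      show "finite (TX \<union> Y)" using fX by (simp add: TX_def)
      show "S \<inter> CK s1 t1 (fst p) \<times> CK s2 t2 (snd p) - {p} \<subseteq> TX \<union> Y"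
        using SV False p by (auto simp: CK_def VK_def TX_def X_def Y_def)
    qed
    also have "\<dots> \<le> card TX + card Y" by (rule card_Un_le)
    also have "card TX \<le> min (card X) s1"
    proof -
      have "card TX \<le> card X" using fX by (intro card_mono) (auto simp: TX_def)
      moreover have "card TX \<le> card (Inl ` {..<s1} \<times> {Inl v} :: ((nat+nat)\<times>(nat+nat)) set)"
        by (rule card_mono) (auto simp: TX_def X_def)
      ultimately show ?thesis by (simp add: card_cartesian_product card_image)
    qed
    finally show ?thesis by simp
  qed
  have e0: "card X = 0 \<longleftrightarrow> X = {}" "card Y = 0 \<longleftrightarrow> Y = {}" "card Z = 0 \<longleftrightarrow> Z = {}"
    using fX by auto
  have XS: "X \<subseteq> S" "Y \<subseteq> S" "Z \<subseteq> S" using SXYZ by auto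
  show ?thesis
  proof (cases "X = {}")
    case X0: True
    show ?thesis
    proof (cases "Y = {}")
      case True
      then obtain p where "p \<in> Z" using Sne SXYZ X0 by auto
      then show ?thesis using hZ[of p] X0 True XS by (intro bexI[of _ p]) auto
    next
      case Yne: False
      then obtain py where py: "py \<in> Y" by auto
      show ?thesis
      proof (cases "Z = {}")
        case True
        then show ?thesis using hY[OF py] X0 py XS by (intro bexI[of _ py]) auto
      next
        case False
        then obtain pz where pz: "pz \<in> Z" by auto
        show ?thesis
        proof (cases "card Z \<le> card Y")
          case True
          then have "card (nbr s1 t1 s2 t2 S py) \<le> min (s1 * t2) (s2 * t1)"
            using hY[OF py] X0 cY cZ by simp
          then show ?thesis using py XS by (intro bexI[of _ py]) auto
        next
          case False
          then have "card (nbr s1 t1 s2 t2 S pz) \<le> min (s1 * t2) (s2 * t1)"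
            using hZ[OF pz] X0 cY cZ by simp
          then show ?thesis using pz XS by (intro bexI[of _ pz]) auto
        qed
      qed
    qed
  next
    case Xne: False
    then obtain px where px: "px \<in> X" by auto
    show ?thesis
    proof (cases "Y = {}")
      case Y0: True
      show ?thesis
      proof (cases "Z = {}")
        case True
        then show ?thesis using hX[OF px] Y0 px XS by (intro bexI[of _ px]) auto
      next
        case False
        then obtain pz where pz: "pz \<in> Z" by auto
        have "card (nbr s1 t1 s2 t2 S pz) \<le> s1" using hZ[OF pz] Y0 by simp
        then show ?thesis using pz XS by (intro bexI[of _ pz]) auto
      qed
    next
      case Yne: False
      then obtain py where py: "py \<in> Y" by auto
      show ?thesis
      proof (cases "Z = {}")
        case True
        have "card (nbr s1 t1 s2 t2 S py) \<le> s2" using hY[OF py] True by simp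
        then show ?thesis using py XS by (intro bexI[of _ py]) auto
      next
        case False
        then obtain pz where pz: "pz \<in> Z" by auto
        have dx: "card (nbr s1 t1 s2 t2 S px) \<le> t1 + t2" using hX[OF px] by simp
        have dy: "card (nbr s1 t1 s2 t2 S py) \<le> s2 * (t1 + 1)" using hY[OF py] cZ by simp
        have dz: "card (nbr s1 t1 s2 t2 S pz) \<le> s1 * (t2 + 1)" using hZ[OF pz] cY by simp
        let ?m = "min (t1 + t2) (min (s1 * (t2 + 1)) (s2 * (t1 + 1)))"
        have mD: "?m \<le> ?D" by (rule max.coboundedI2, rule max.cobounded1)
        have "?m = t1 + t2 \<or> ?m = s1 * (t2 + 1) \<or> ?m = s2 * (t1 + 1)" by (simp add: min_def)
        then show ?thesis
        proof (elim disjE)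
          assume "?m = t1 + t2" then show ?thesis using dx mD px XS by (intro bexI[of _ px]) auto
        next
          assume "?m = s1 * (t2 + 1)" then show ?thesis using dz mD pz XS by (intro bexI[of _ pz]) auto
        next
          assume "?m = s2 * (t1 + 1)" then show ?thesis using dy mD py XS by (intro bexI[of _ py]) auto
        qed
      qed
    qed
  qed
qed



lemma use_P:
  assumes P: "\<forall>H. nonempty_subgraph H (GG s1 t1 s2 t2) \<longrightarrow> (\<exists>v\<in>verts H. degree H v \<le> y)"
    and S: "S \<subseteq> VK s1 t1 \<times> VK s2 t2" "S \<noteq> {}"
    and LB: "\<And>p. p \<in> S \<Longrightarrow> m \<le> card (nbr s1 t1 s2 t2 S p)"
  shows "m \<le> y"
proof -
  obtain v where v: "v \<in> verts (ind s1 t1 s2 t2 S)" "degree (ind s1 t1 s2 t2 S) v \<le> y"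
    using P ind_sub[OF S] by blast
  have vS: "v \<in> S" using v by (simp add: ind_def verts_def)
  show ?thesis using LB[OF vS] v deg_ind[OF S(1) vS] by simp
qed

theorem mainTheorem6:
  fixes s1 t1 s2 t2 :: nat
  assumes "1 \<le> s1" "s1 \<le> t1" "1 \<le> s2" "s2 \<le> t2"
  shows "degen (strong_prod (K_bip s1 t1) (K_bip s2 t2)) =
           max (s1 + s2 + s1 * s2)
             (max (min (t1 + t2) (min (s1 * (t2 + 1)) (s2 * (t1 + 1))))
                  (min (s1 * t2) (s2 * t1)))" (is "_ = ?D")
  unfolding degen_def
proof (rule Least_equality)
  show "\<forall>H. nonempty_subgraph H (GG s1 t1 s2 t2) \<longrightarrow> (\<exists>v\<in>verts H. degree H v \<le> ?D)"
  proof (intro allI impI)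
    fix H assume H: "nonempty_subgraph H (GG s1 t1 s2 t2)"
    then have SV: "verts H \<subseteq> VK s1 t1 \<times> VK s2 t2" and ne: "verts H \<noteq> {}"
      by (auto simp: nonempty_subgraph_def verts_GG)
    obtain p where "p \<in> verts H" "card (nbr s1 t1 s2 t2 (verts H) p) \<le> ?D"
      using UB[OF SV ne] by blast
    then show "\<exists>v\<in>verts H. degree H v \<le> ?D" using deg_le[OF H, of p] by (intro bexI[of _ p]) auto
  qed
next
  fix y assume P: "\<forall>H. nonempty_subgraph H (GG s1 t1 s2 t2) \<longrightarrow> (\<exists>v\<in>verts H. degree H v \<le> y)"
  have a0: "(Inl 0, Inl 0) \<in> VK s1 t1 \<times> VK s2 t2" using assms by (auto simp: VK_def)
  have "s1 + s2 + s1 * s2 \<le> y"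
  proof -
    have ne: "VK s1 t1 \<times> VK s2 t2 \<noteq> {}" using a0 by blast
    show ?thesis by (rule use_P[OF P subset_refl ne LB1]) (use assms in auto)
  qed
  moreover have "min (t1 + t2) (min (s1 * (t2 + 1)) (s2 * (t1 + 1))) \<le> y"
  proof -
    let ?S = "VK s1 t1 \<times> VK s2 t2 - Inr ` {..<t1} \<times> Inr ` {..<t2}"
    have ne: "?S \<noteq> {}" using a0 by blast
    have sub: "?S \<subseteq> VK s1 t1 \<times> VK s2 t2" by blast
    show ?thesis by (rule use_P[OF P sub ne LB2])
  qed
  moreover have "min (s1 * t2) (s2 * t1) \<le> y"
  proof -
    let ?S = "Inl ` {..<s1} \<times> Inr ` {..<t2} \<union> Inr ` {..<t1} \<times> Inl ` {..<s2} :: ((nat+nat)\<times>(nat+nat)) set"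
    have "(Inl 0, Inr 0) \<in> ?S" using assms by auto
    then have ne: "?S \<noteq> {}" by blast
    have sub: "?S \<subseteq> VK s1 t1 \<times> VK s2 t2" by (auto simp: VK_def)
    show ?thesis by (rule use_P[OF P sub ne LB3])
  qed
  ultimately show "?D \<le> y" by simp
qed

end
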